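(* Let $\theta>0$ and suppose $\mathcal A$ is Hurwitz and $\inf_{\lambda\in\mathbb R}\lambda_{\min}(\Delta_\theta(\lambda))>0$. Then the operator $\mathfrak M_{\theta,F}$ satisfies $$\sup_{\lambda\in\mathbb R}\|\mathfrak M_{\theta,F}\|\le\frac{2\,\vartheta_r(2\theta\|F\|_\infty^2)}{\inf_{\lambda\in\mathbb R}\lambda_{\min}(\Delta_\theta(\lambda))},\qquad \vartheta_r(u):=\phi(u)+\sqrt r\,\phi'(u)\,u,$$ where $\|\mathfrak M_{\theta,F}\|$ is the operator norm on $\mathbb C^{r\times m}$ induced by the Frobenius norm, $\phi'$ is the derivative of $\phi$, and $\|F\|_\infty:=\sup_{\lambda\in\mathbb R}\|F(i\lambda)\|$ (spectral norm).
   Context: Let $m,N$ be even, $r\ge1$, $\mathbf J=\begin{bmatrix}0&1\\-1&0\end{bmatrix}$, $J:=I_{m/2}\otimes\mathbf J$, $\Omega:=I_m+iJ$, $S:=\Omega^T/\sqrt2$. For $\mathcal A\in\mathbb R^{N\times N}$, $\mathcal B\in\mathbb R^{N\times m}$, $\mathcal C\in\mathbb R^{r\times N}$: $G(s):=(sI_N-\mathcal A)^{-1}$, $F(s):=\mathcal CG(s)\mathcal B$; for $\lambda\in\mathbb R$ (argument $i\lambda$ suppressed), $\Psi:=FJF^*$; $\phi(u):=(e^u-1)/u=\sum_{k\ge0}u^k/(k+1)!$ applied to matrices via the series; $\Sigma_\theta:=SF^*\phi(2i\theta\Psi)FS$, $\Delta_\theta:=I_m-\theta\Sigma_\theta$.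 $\varpi_\theta:=\Big(\phi\Big(\begin{bmatrix}2i\theta\Psi&0\\ FS\Delta_\theta^{-1}SF^*&2i\theta\Psi\end{bmatrix}\Big)\Big)_{21}$ (bottom-left $r\times r$ block), and $\mathfrak M_{\theta,F}(X):=\phi(2i\theta\Psi)\,X\,S\Delta_\theta^{-1}S+\varpi_\theta\,X\,(2i\theta J)$ for $X\in\mathbb C^{r\times m}$. *)

theory Defs
  imports "HOL-Analysis.Analysis"
begin

(* Matrices are HOL-Analysis matrices  'a^'cols^'rows.  The m-dimensional index set is
   'k \<times> bool (so m = 2 * CARD('k) is even); bool encodes {1,2} via False ~ 1, True ~ 2. *)

definition cmat :: "real^'c^'r \<Rightarrow> complex^'c^'r" where
  "cmat A = (\<chi> i j. complex_of_real (A $ i $ j))"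

definition cadj :: "complex^'c^'r \<Rightarrow> complex^'r^'c" where
  "cadj X = (\<chi> i j. cnj (X $ j $ i))"

primrec matpow :: "'a::semiring_1^'n^'n \<Rightarrow> nat \<Rightarrow> 'a^'n^'n" where
  "matpow A 0 = mat 1"
| "matpow A (Suc k) = A ** matpow A k"

text \<open>phi(u) = (e^u - 1)/u = sum_k u^k/(k+1)!, scalar and matrix versions (via the series).\<close>
definition phi :: "real \<Rightarrow> real" where
  "phi u = (\<Sum>k. u ^ k / fact (k + 1))"

definition mphi :: "complex^'n^'n \<Rightarrow> complex^'n^'n" where
  "mphi X = (\<Sum>k. (1 / fact (k + 1)) *\<^sub>R matpow X k)"

text \<open>The 2x2 block J and J = I_{m/2} (Kronecker) J.\<close>
definition Jblk :: "bool \<Rightarrow> bool \<Rightarrow> real" where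
  "Jblk a b = (if \<not> a \<and> b then 1 else if a \<and> \<not> b then -1 else 0)"

definition Jmat :: "complex^('k::finite \<times> bool)^('k \<times> bool)" where
  "Jmat = (\<chi> u v. if fst u = fst v then complex_of_real (Jblk (snd u) (snd v)) else 0)"

definition Omega :: "complex^('k::finite \<times> bool)^('k \<times> bool)" where
  "Omega = mat 1 + mat \<i> ** Jmat"

definition Smat :: "complex^('k::finite \<times> bool)^('k \<times> bool)" where
  "Smat = (1 / sqrt 2) *\<^sub>R transpose Omega"

definition lambda_min :: "complex^'n^'n \<Rightarrow> real" where
  "lambda_min A = Inf {x::real. \<exists>v. v \<noteq> 0 \<and> A *v v = complex_of_real x *s v}"

definition hurwitz :: "real^'n^'n \<Rightarrow> bool" where
  "hurwitz A \<longleftrightarrow> (\<forall>c v. v \<noteq> 0 \<and> cmat A *v v = c *s v \<longrightarrow> Re c < 0)"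

definition Gfun :: "real^'n^'n \<Rightarrow> complex \<Rightarrow> complex^'n^'n" where
  "Gfun A s = matrix_inv (mat s - cmat A)"

definition Ffun :: "real^'n^'n \<Rightarrow> real^'m^'n \<Rightarrow> real^'n^'r \<Rightarrow> real \<Rightarrow> complex^'m^'r" where
  "Ffun A B C w = cmat C ** Gfun A (\<i> * complex_of_real w) ** cmat B"

definition Psi :: "complex^('k::finite \<times> bool)^'r \<Rightarrow> complex^'r::finite^'r" where
  "Psi F = F ** Jmat ** cadj F"

definition Sigma :: "real \<Rightarrow> complex^('k::finite \<times> bool)^'r \<Rightarrow> complex^('k::finite \<times> bool)^('k \<times> bool)" where
  "Sigma \<theta> F = Smat ** cadj F ** mphi (mat (2 * \<i> * complex_of_real \<theta>) ** Psi F) ** F ** Smat"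

definition Delta :: "real \<Rightarrow> complex^('k::finite \<times> bool)^'r \<Rightarrow> complex^('k::finite \<times> bool)^('k \<times> bool)" where
  "Delta \<theta> F = mat 1 - mat (complex_of_real \<theta>) ** Sigma \<theta> F"

definition blockM :: "real \<Rightarrow> complex^('k::finite \<times> bool)^'r \<Rightarrow> complex^('r::finite + 'r)^('r + 'r)" where
  "blockM \<theta> F = (let P = mat (2 * \<i> * complex_of_real \<theta>) ** Psi F;
                      Q = F ** Smat ** matrix_inv (Delta \<theta> F) ** Smat ** cadj F in
     (\<chi> u v. case (u, v) of
         (Inl i, Inl j) \<Rightarrow> P $ i $ j
       | (Inl i, Inr j) \<Rightarrow> 0
       | (Inr i, Inl j) \<Rightarrow> Q $ i $ j
       | (Inr i, Inr j) \<Rightarrow> P $ i $ j))"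

definition varpi :: "real \<Rightarrow> complex^('k::finite \<times> bool)^'r \<Rightarrow> complex^'r::finite^'r" where
  "varpi \<theta> F = (\<chi> i j. mphi (blockM \<theta> F) $ Inr i $ Inl j)"

definition Mop :: "real \<Rightarrow> complex^('k::finite \<times> bool)^'r \<Rightarrow> complex^('k::finite \<times> bool)^'r \<Rightarrow> complex^('k::finite \<times> bool)^'r" where
  "Mop \<theta> F X = mphi (mat (2 * \<i> * complex_of_real \<theta>) ** Psi F) ** X ** Smat ** matrix_inv (Delta \<theta> F) ** Smat
              + varpi \<theta> F ** X ** (mat (2 * \<i> * complex_of_real \<theta>) ** Jmat)"

definition vartheta :: "nat \<Rightarrow> real \<Rightarrow> real" where
  "vartheta r u = phi u + sqrt (real r) * deriv phi u * u"

end

theory Submission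
  imports Defs
begin


definition pc :: "nat \<Rightarrow> real" where "pc k = 1 / fact (k + 1)"

lemma pc_nonneg: "0 \<le> pc k" by (simp add: pc_def)

lemma pc_summable: "summable (\<lambda>n. pc n * y ^ n)"
proof (rule summable_comparison_test'[OF summable_exp[of "\<bar>y\<bar>"]])
  fix n :: nat assume "n \<ge> 0"
  have "fact n \<le> (fact (n+1) :: real)" by (intro fact_mono) auto
  hence "1 / fact (n+1) \<le> inverse (fact n :: real)"
    by (simp add: divide_simps)
  hence "pc n * \<bar>y\<bar> ^ n \<le> inverse (fact n) * \<bar>y\<bar> ^ n"
    by (simp only: pc_def) (rule mult_right_mono, simp_all)
  thus "norm (pc n * y ^ n) \<le> inverse (fact n) * \<bar>y\<bar> ^ n"
    by (simp add: abs_mult power_abs pc_nonneg)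
qed

lemma phi_eq: "phi = (\<lambda>x. \<Sum>n. pc n * x ^ n)"
  by (rule ext) (simp add: phi_def pc_def)

lemma deriv_phi: "deriv phi x = (\<Sum>n. diffs pc n * x ^ n)"
  unfolding phi_eq
  by (rule DERIV_imp_deriv[OF termdiffs_strong_converges_everywhere[OF pc_summable]])

lemma diffs_pc_summable: "summable (\<lambda>n. diffs pc n * x ^ n)"
  by (rule termdiff_converges_all[OF pc_summable])

lemma diffs_pc_nonneg: "0 \<le> diffs pc n" by (simp add: diffs_def pc_def)

lemma phi_mono: assumes "0 \<le> p" "p \<le> a" shows "phi p \<le> phi a"
  unfolding phi_eq
  by (intro suminf_le pc_summable allI mult_left_mono power_mono pc_nonneg assms)

lemma dphi_mono: assumes "0 \<le> p" "p \<le> a" shows "deriv phi p \<le> deriv phi a"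
  unfolding deriv_phi
  by (intro suminf_le diffs_pc_summable allI mult_left_mono power_mono diffs_pc_nonneg assms)

lemma phi_nonneg: assumes "0 \<le> p" shows "0 \<le> phi p"
  unfolding phi_eq by (intro suminf_nonneg pc_summable allI mult_nonneg_nonneg pc_nonneg zero_le_power assms)

lemma dphi_nonneg: assumes "0 \<le> p" shows "0 \<le> deriv phi p"
  unfolding deriv_phi by (intro suminf_nonneg diffs_pc_summable allI mult_nonneg_nonneg diffs_pc_nonneg zero_le_power assms)

lemma dphi_sums: "(\<lambda>n. of_nat n * pc n * x ^ (n - Suc 0)) sums deriv phi x"
  unfolding deriv_phi by (rule diffs_equiv[OF diffs_pc_summable])

lemma phi_sums: "(\<lambda>n. pc n * x ^ n) sums phi x"
  unfolding phi_eq using pc_summable summable_sums by blast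



definition opn :: "complex^'c^'r \<Rightarrow> real" where "opn M = onorm ((*v) M)"

lemma opn_bound: "norm (M *v v) \<le> opn M * norm v"
  unfolding opn_def by (rule onorm[OF matrix_vector_mul_bounded_linear])

lemma opn_le: "(\<And>v. norm (M *v v) \<le> b * norm v) \<Longrightarrow> opn M \<le> b"
  unfolding opn_def by (rule onorm_le)

lemma opn_nonneg: "0 \<le> opn M"
  unfolding opn_def by (rule onorm_pos_le[OF matrix_vector_mul_bounded_linear])

lemma opn_mult: "opn (A ** B) \<le> opn A * opn B"
proof (rule opn_le)
  fix v
  have "norm ((A ** B) *v v) = norm (A *v (B *v v))" by (simp add: matrix_vector_mul_assoc)
  also have "\<dots> \<le> opn A * norm (B *v v)" by (rule opn_bound)
  also have "\<dots> \<le> opn A * (opn B * norm v)" by (intro mult_left_mono opn_bound opn_nonneg)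
  finally show "norm ((A ** B) *v v) \<le> opn A * opn B * norm v" by (simp add: mult.assoc)
qed

lemma opn_add: "opn (A + B) \<le> opn A + opn B"
proof (rule opn_le)
  fix v
  have "norm ((A + B) *v v) = norm (A *v v + B *v v)" by (simp add: matrix_vector_mult_add_rdistrib)
  also have "\<dots> \<le> norm (A *v v) + norm (B *v v)" by (rule norm_triangle_ineq)
  also have "\<dots> \<le> opn A * norm v + opn B * norm v" by (intro add_mono opn_bound)
  finally show "norm ((A + B) *v v) \<le> (opn A + opn B) * norm v" by (simp add: algebra_simps)
qed

lemma opn_diff: "opn (A - B) \<le> opn A + opn B"
proof (rule opn_le)
  fix v
  have "norm ((A - B) *v v) = norm (A *v v - B *v v)" by (simp add: matrix_vector_mult_diff_rdistrib)
  also have "\<dots> \<le> norm (A *v v) + norm (B *v v)" by (rule norm_triangle_ineq4)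
  also have "\<dots> \<le> opn A * norm v + opn B * norm v" by (intro add_mono opn_bound)
  finally show "norm ((A - B) *v v) \<le> (opn A + opn B) * norm v" by (simp add: algebra_simps)
qed

lemma norm_vec_sq: "(norm (x::'a::real_normed_vector^'n))\<^sup>2 = (\<Sum>i\<in>UNIV. (norm (x$i))\<^sup>2)"
  by (simp add: norm_vec_def L2_set_def sum_nonneg)

lemma norm_smult: "norm ((c::complex) *s (x::complex^'n)) = norm c * norm x"
proof -
  have "norm (c *s x) = L2_set (\<lambda>i. norm c * norm (x$i)) UNIV"
    by (simp add: norm_vec_def norm_mult)
  also have "\<dots> = norm c * norm x"
    by (simp add: norm_vec_def L2_set_right_distrib)
  finally show ?thesis .
qed

lemma mat_mult_left: "(mat c ** M) = (\<chi> i j. c * M$i$j)"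
  by (simp add: matrix_matrix_mult_def mat_def vec_eq_iff if_distrib if_distribR sum.delta' cong: if_cong)

lemma mat_mult_right: "(M ** mat c) = (\<chi> i j. M$i$j * c)"
  by (simp add: matrix_matrix_mult_def mat_def vec_eq_iff if_distrib if_distribR sum.delta cong: if_cong)

lemma mat_comm: "(mat (c::complex) ** M) = (M ** mat c)"
  by (simp add: mat_mult_left mat_mult_right mult.commute)

lemma mat_vec: "mat c *v v = c *s (v::complex^'n)"
  by (simp add: matrix_vector_mult_def mat_def vec_eq_iff if_distrib if_distribR sum.delta cong: if_cong)

lemma mat_mult_vec: "(mat (c::complex) ** M) *v v = c *s (M *v v)"
  by (simp add: matrix_vector_mul_assoc[symmetric] mat_vec)

lemma opn_mat_mult: "opn (mat (c::complex) ** M) \<le> norm c * opn M"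
proof (rule opn_le)
  fix v
  show "norm ((mat c ** M) *v v) \<le> norm c * opn M * norm v"
    by (simp add: mat_mult_vec norm_smult mult.assoc mult_left_mono opn_bound)
qed

lemma opn_mat_mult_r: "opn (M ** mat (c::complex)) \<le> norm c * opn M"
  using opn_mat_mult[of c M] by (simp add: mat_comm)

lemma opn_mat: "opn (mat (c::complex) :: complex^'n^'n) \<le> norm c"
proof (rule opn_le)
  fix v :: "complex^'n"
  show "norm (mat c *v v) \<le> norm c * norm v" by (simp add: mat_vec norm_smult)
qed

lemma smult_scaleR: "(r::real) *\<^sub>R (v::complex^'n) = complex_of_real r *s v"
  by (rule vec_eq_iff[THEN iffD2], rule allI) (metis vector_scaleR_component scaleR_conv_of_real vector_smult_component)

lemma scaleR_mat_vec: "((r::real) *\<^sub>R M) *v (v::complex^'n) = r *\<^sub>R (M *v v)"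
  by (simp add: vec_eq_iff matrix_vector_mult_def scaleR_sum_right)

lemma opn_scaleR: "opn ((r::real) *\<^sub>R M) \<le> \<bar>r\<bar> * opn M"
proof (rule opn_le)
  fix v
  show "norm ((r *\<^sub>R M) *v v) \<le> \<bar>r\<bar> * opn M * norm v"
    by (simp add: scaleR_mat_vec mult.assoc mult_left_mono opn_bound)
qed

lemma uminus_mat_vec: "(- M) *v v = - (M *v (v::complex^'n))"
  by (simp add: matrix_vector_mult_def vec_eq_iff sum_negf)

lemma opn_uminus: "opn (- M) \<le> opn M"
  by (rule opn_le) (simp add: uminus_mat_vec opn_bound)

lemma row_mult: "(X ** B) $ i = transpose B *v ((X::complex^'c^'r) $ i)"
  by (auto simp: matrix_matrix_mult_def matrix_vector_mult_def transpose_def vec_eq_iff mult.commute intro!: sum.cong)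

lemma norm_mult_right: "norm (X ** B) \<le> norm (X::complex^'c^'r) * opn (transpose (B::complex^'d^'c))"
proof -
  have "norm (X ** B) = L2_set (\<lambda>i. norm (transpose B *v X$i)) UNIV"
    by (simp add: norm_vec_def row_mult)
  also have "\<dots> \<le> L2_set (\<lambda>i. opn (transpose B) * norm (X$i)) UNIV"
    by (intro L2_set_mono opn_bound) auto
  also have "\<dots> = opn (transpose B) * norm X"
    by (simp add: norm_vec_def L2_set_right_distrib opn_nonneg)
  finally show ?thesis by (simp add: mult.commute)
qed

lemma norm_transpose: "norm (transpose (X::complex^'c^'r)) = norm X"
proof -
  have "(norm (transpose X))\<^sup>2 = (norm X)\<^sup>2"
    by (simp add: norm_vec_sq transpose_def) (rule sum.swap)
  thus ?thesis by (simp add: power2_eq_iff_nonneg)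
qed

lemma norm_mult_left: "norm (A ** X) \<le> opn (A::complex^'c^'r) * norm (X::complex^'d^'c)"
proof -
  have "norm (A ** X) = norm (transpose X ** transpose A)"
    by (metis matrix_transpose_mul norm_transpose)
  also have "\<dots> \<le> norm (transpose X) * opn A"
    using norm_mult_right[of "transpose X" "transpose A"] by simp
  finally show ?thesis by (simp add: norm_transpose mult.commute)
qed

lemma norm_sandwich: "norm (A ** X ** B) \<le> opn A * norm X * opn (transpose B)"
proof -
  have "norm (A ** X ** B) \<le> norm (A ** X) * opn (transpose B)" by (rule norm_mult_right)
  also have "\<dots> \<le> opn A * norm X * opn (transpose B)"
    by (intro mult_right_mono norm_mult_left opn_nonneg)
  finally show ?thesis .
qed



lemma mv_scaleR: "A *v (c *\<^sub>R x) = c *\<^sub>R (A *v (x::complex^'n))"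
  using matrix_vector_mul_linear[of A] by (simp add: linear_iff)

lemma inner_cvec: "(u::complex^'n) \<bullet> v = Re (\<Sum>i\<in>UNIV. u$i * cnj (v$i))"
  by (simp add: inner_vec_def inner_complex_def)

lemma cadj_inner: "(cadj M *v u) \<bullet> v = u \<bullet> (M *v (v::complex^'c))"
proof -
  have "(\<Sum>i\<in>UNIV. (cadj M *v u)$i * cnj (v$i)) = (\<Sum>j\<in>UNIV. u$j * cnj ((M *v v)$j))"
    unfolding cadj_def matrix_vector_mult_def
    by (simp add: sum_distrib_left sum_distrib_right mult_ac) (rule sum.swap)
  thus ?thesis by (simp add: inner_cvec)
qed

lemma opn_cadj: "opn (cadj M) \<le> opn M"
proof (rule opn_le)
  fix u
  define y where "y = cadj M *v u"
  have "(norm y)\<^sup>2 = y \<bullet> y" by (simp add: power2_norm_eq_inner)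
  also have "\<dots> = u \<bullet> (M *v y)" unfolding y_def by (rule cadj_inner)
  also have "\<dots> \<le> norm u * norm (M *v y)" by (rule norm_cauchy_schwarz)
  also have "\<dots> \<le> norm u * (opn M * norm y)" by (intro mult_left_mono opn_bound) auto
  finally have *: "norm y * norm y \<le> (opn M * norm u) * norm y" by (simp add: power2_eq_square mult_ac)
  show "norm (cadj M *v u) \<le> opn M * norm u"
  proof (cases "norm y = 0")
    case True thus ?thesis using opn_nonneg[of M] by (simp add: y_def)
  next
    case False
    hence "norm y > 0" by simp
    with * show ?thesis unfolding y_def[symmetric] by (simp add: mult_le_cancel_right)
  qed
qed

definition vconj :: "complex^'n \<Rightarrow> complex^'n" where "vconj v = (\<chi> i. cnj (v$i))"

lemma norm_vconj: "norm (vconj v) = norm v"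
  by (simp add: vconj_def norm_vec_def)

lemma transpose_vconj: "transpose M *v u = vconj (cadj M *v vconj (u::complex^'r))"
  by (simp add: vconj_def cadj_def transpose_def matrix_vector_mult_def vec_eq_iff)

lemma opn_transpose: "opn (transpose M) \<le> opn M"
proof (rule opn_le)
  fix u
  have "norm (transpose M *v u) = norm (cadj M *v vconj u)" by (simp only: transpose_vconj norm_vconj)
  also have "\<dots> \<le> opn (cadj M) * norm (vconj u)" by (rule opn_bound)
  also have "\<dots> \<le> opn M * norm u" by (simp add: norm_vconj mult_right_mono opn_cadj)
  finally show "norm (transpose M *v u) \<le> opn M * norm u" .
qed

lemma cadj_mult: "cadj (A ** B) = cadj B ** cadj (A::complex^'c^'r)"
  by (simp add: cadj_def matrix_matrix_mult_def vec_eq_iff mult.commute)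

lemma cadj_cadj: "cadj (cadj A) = A" by (simp add: cadj_def vec_eq_iff)
lemma cadj_add: "cadj (A + B) = cadj A + cadj B" by (simp add: cadj_def vec_eq_iff)
lemma cadj_diff: "cadj (A - B) = cadj A - cadj B" by (simp add: cadj_def vec_eq_iff)
lemma cadj_uminus: "cadj (- A) = - cadj A" by (simp add: cadj_def vec_eq_iff)
lemma cadj_mat: "cadj (mat c) = mat (cnj c)" by (simp add: cadj_def mat_def vec_eq_iff)
lemma cadj_scaleR: "cadj ((r::real) *\<^sub>R A) = r *\<^sub>R cadj A" by (simp add: cadj_def vec_eq_iff)
lemma cadj_transpose: "cadj (transpose A) = transpose (cadj A)" by (simp add: cadj_def transpose_def vec_eq_iff)

definition herm :: "complex^'n^'n \<Rightarrow> bool" where "herm H \<longleftrightarrow> cadj H = H"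

lemma herm_sym: "herm H \<Longrightarrow> (H *v u) \<bullet> v = u \<bullet> (H *v v)"
  using cadj_inner[of H u v] by (simp add: herm_def)

lemma of_real_smult: "complex_of_real r *s v = r *\<^sub>R (v::complex^'n)"
  by (simp add: smult_scaleR)

lemma herm_min:
  fixes H :: "complex^'n^'n"
  assumes h: "herm H"
  shows "\<exists>u0 m. norm u0 = 1 \<and> H *v u0 = complex_of_real m *s u0 \<and> (\<forall>v. m * (norm v)\<^sup>2 \<le> (H *v v) \<bullet> v)"
proof -
  have "\<exists>x\<in>sphere 0 1. \<forall>y\<in>sphere 0 1. (H *v x) \<bullet> x \<le> (H *v y) \<bullet> (y::complex^'n)"
    by (intro continuous_attains_inf compact_sphere continuous_intros) auto
  then obtain u0 where u0: "norm u0 = 1" and min: "\<And>y. norm y = 1 \<Longrightarrow> (H *v u0) \<bullet> u0 \<le> (H *v y) \<bullet> y"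
    by auto
  define m where "m = (H *v u0) \<bullet> u0"
  have lb: "m * (norm v)\<^sup>2 \<le> (H *v v) \<bullet> v" for v
  proof (cases "v = 0")
    case True thus ?thesis by simp
  next
    case False
    hence nv: "norm v > 0" by simp
    have "m \<le> (H *v ((1/norm v) *\<^sub>R v)) \<bullet> ((1/norm v) *\<^sub>R v)"
      unfolding m_def by (rule min) (use nv in simp)
    also have "\<dots> = ((H *v v) \<bullet> v) / (norm v)\<^sup>2"
      by (simp add: mv_scaleR power2_eq_square)
    finally show ?thesis using nv by (simp add: field_simps)
  qed
  define Hm where "Hm = H - mat (complex_of_real m)"
  have hm: "herm Hm" using h by (simp add: herm_def Hm_def cadj_diff cadj_mat)
  have Hmv: "Hm *v v = H *v v - m *\<^sub>R v" for v
    by (simp add: Hm_def matrix_vector_mult_diff_rdistrib mat_vec of_real_smult)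
  have q: "0 \<le> (Hm *v v) \<bullet> v" for v
    using lb[of v] by (simp add: Hmv inner_diff_left power2_norm_eq_inner)
  have q0: "(Hm *v u0) \<bullet> u0 = 0"
    using u0 by (simp add: Hmv inner_diff_left power2_norm_eq_inner[symmetric] m_def)
  define w where "w = Hm *v u0"
  define b where "b = w \<bullet> w"
  define c where "c = (Hm *v w) \<bullet> w"
  have c0: "0 \<le> c" unfolding c_def by (rule q)
  have b0: "0 \<le> b" unfolding b_def by simp
  have exp: "(Hm *v (u0 + t *\<^sub>R w)) \<bullet> (u0 + t *\<^sub>R w) = 2 * t * b + t\<^sup>2 * c" for t
  proof -
    have q0': "u0 \<bullet> w = 0" using q0 by (simp add: w_def inner_commute)
    have s: "(Hm *v w) \<bullet> u0 = b" using herm_sym[OF hm, of w u0] by (simp add: b_def w_def inner_commute)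
    show ?thesis
      by (simp add: matrix_vector_right_distrib mv_scaleR inner_add_left inner_add_right q0 q0' s
          flip: w_def) (simp add: b_def c_def power2_eq_square inner_commute algebra_simps q0')
  qed
  have "b = 0"
  proof (rule ccontr)
    assume "b \<noteq> 0"
    hence bp: "b > 0" using b0 by simp
    define t where "t = - b / (c + 1)"
    have "2 * t * b + t\<^sup>2 * c < 0"
    proof -
      have c1: "c + 1 > 0" using c0 by simp
      have ts: "t * (c+1) = -b" using c1 by (simp add: t_def)
      have "(c+1)\<^sup>2 * (2*t*b + t\<^sup>2*c) = 2*(t*(c+1))*b*(c+1) + (t*(c+1))\<^sup>2*c"
        by (simp add: algebra_simps power2_eq_square)
      also have "\<dots> = - (b\<^sup>2 * c + 2 * b\<^sup>2)" by (simp only: ts) (simp add: power2_eq_square algebra_simps)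
      also have "\<dots> < 0"
      proof -
        have "0 \<le> b\<^sup>2 * c" using c0 by simp
        moreover have "0 < b\<^sup>2" using bp by simp
        ultimately show ?thesis by linarith
      qed
      finally have "(c+1)\<^sup>2 * (2*t*b + t\<^sup>2*c) < 0" .
      thus ?thesis using c1 by (simp add: mult_less_0_iff)
    qed
    with q[of "u0 + t *\<^sub>R w"] exp[of t] show False by simp
  qed
  hence "w = 0" by (simp add: b_def)
  hence "H *v u0 = complex_of_real m *s u0" by (simp add: w_def Hmv of_real_smult)
  with u0 lb show ?thesis by blast
qed

lemma herm_lmin:
  fixes H :: "complex^'n^'n"
  assumes h: "herm H"
  shows "lambda_min H * (norm v)\<^sup>2 \<le> (H *v v) \<bullet> v" and "- opn H \<le> lambda_min H"
proof -
  obtain u0 m where u0: "norm u0 = 1" and ev: "H *v u0 = complex_of_real m *s u0"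
    and lb: "\<And>v. m * (norm v)\<^sup>2 \<le> (H *v v) \<bullet> v"
    using herm_min[OF h] by blast
  let ?S = "{x::real. \<exists>v. v \<noteq> 0 \<and> H *v v = complex_of_real x *s v}"
  have mS: "m \<in> ?S" using u0 ev by (intro CollectI exI[of _ u0]) auto
  have ge: "m \<le> x" if "x \<in> ?S" for x
  proof -
    from that obtain v where v: "v \<noteq> 0" "H *v v = complex_of_real x *s v" by auto
    have "m * (norm v)\<^sup>2 \<le> x * (norm v)\<^sup>2"
      using lb[of v] v by (simp add: of_real_smult power2_norm_eq_inner)
    thus ?thesis using v by simp
  qed
  have lm: "lambda_min H = m"
    unfolding lambda_min_def by (rule cInf_eq_minimum[OF mS ge])
  show "lambda_min H * (norm v)\<^sup>2 \<le> (H *v v) \<bullet> v" using lb lm by simp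
  have "m = (H *v u0) \<bullet> u0" using ev u0 by (simp add: of_real_smult power2_norm_eq_inner[symmetric])
  moreover have "- (norm (H *v u0) * norm u0) \<le> (H *v u0) \<bullet> u0"
    using norm_cauchy_schwarz[of "- (H *v u0)" u0] by simp
  moreover have "norm (H *v u0) * norm u0 \<le> opn H"
    using opn_bound[of H u0] u0 by simp
  ultimately show "- opn H \<le> lambda_min H" using lm by simp
qed

lemma herm_lower:
  fixes H :: "complex^'n^'n"
  assumes h: "herm H"
  shows "lambda_min H * norm v \<le> norm (H *v v)"
proof (cases "v = 0")
  case True thus ?thesis by simp
next
  case False
  have "lambda_min H * (norm v)\<^sup>2 \<le> norm (H *v v) * norm v"
    using herm_lmin(1)[OF h, of v] norm_cauchy_schwarz[of "H *v v" v] by linarith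
  thus ?thesis using False by (simp add: power2_eq_square mult_le_cancel_right)
qed



lemma matpow_comm: "matpow X k ** X = X ** matpow X k"
  by (induction k) (simp_all add: matrix_mul_assoc[symmetric])

lemma opn_matpow: "opn (matpow (X::complex^'n^'n) k) \<le> opn X ^ k"
proof (induction k)
  case 0 thus ?case using opn_mat[of 1] by simp
next
  case (Suc k)
  have "opn (matpow X (Suc k)) \<le> opn X * opn (matpow X k)" by (simp add: opn_mult)
  also have "\<dots> \<le> opn X * opn X ^ k" by (intro mult_left_mono Suc opn_nonneg)
  finally show ?case by simp
qed

lemma norm_matpow: "norm (matpow (X::complex^'n^'n) k) \<le> opn X ^ k * norm (mat 1 :: complex^'n^'n)"
proof (induction k)
  case 0 thus ?case by simp
next
  case (Suc k)
  have "norm (matpow X (Suc k)) \<le> opn X * norm (matpow X k)" by (simp add: norm_mult_left)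
  also have "\<dots> \<le> opn X * (opn X ^ k * norm (mat 1 :: complex^'n^'n))" by (intro mult_left_mono Suc opn_nonneg)
  finally show ?case by (simp add: mult_ac)
qed

lemma mphi_summable: "summable (\<lambda>k. pc k *\<^sub>R matpow (X::complex^'n^'n) k)"
proof (rule summable_comparison_test)
  show "\<exists>N. \<forall>n\<ge>N. norm (pc n *\<^sub>R matpow X n) \<le> pc n * opn X ^ n * norm (mat 1 :: complex^'n^'n)"
    using norm_matpow[of X] by (auto simp: pc_nonneg mult.assoc intro!: mult_left_mono)
  show "summable (\<lambda>n. pc n * opn X ^ n * norm (mat 1 :: complex^'n^'n))"
    by (intro summable_mult2 pc_summable)
qed

lemma mphi_sums: "(\<lambda>k. pc k *\<^sub>R matpow (X::complex^'n^'n) k) sums mphi X"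
proof -
  have "mphi X = (\<Sum>k. pc k *\<^sub>R matpow X k)" by (simp add: mphi_def pc_def)
  thus ?thesis using mphi_summable summable_sums by metis
qed

lemma bl_mv: "bounded_linear (\<lambda>M::complex^'c^'r. M *v v)"
proof -
  have "linear (\<lambda>M::complex^'c^'r. M *v v)"
    by (rule linearI) (simp_all add: matrix_vector_mult_add_rdistrib scaleR_mat_vec)
  thus ?thesis by (simp add: linear_conv_bounded_linear)
qed

lemma bl_cadj: "bounded_linear (cadj :: complex^'c^'r \<Rightarrow> complex^'r^'c)"
proof -
  have "linear (cadj :: complex^'c^'r \<Rightarrow> complex^'r^'c)"
    by (rule linearI) (simp_all add: cadj_add cadj_scaleR)
  thus ?thesis by (simp add: linear_conv_bounded_linear)
qed

lemma mphi_vec_sums: "(\<lambda>k. pc k *\<^sub>R (matpow (X::complex^'n^'n) k *v v)) sums (mphi X *v v)"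
  using bounded_linear.sums[OF bl_mv[of v] mphi_sums[of X]] by (simp add: scaleR_mat_vec)

lemma opn_mphi: "opn (mphi (X::complex^'n^'n)) \<le> phi (opn X)"
proof (rule opn_le)
  fix v :: "complex^'n"
  have "(\<lambda>k. pc k * opn X ^ k * norm v) sums (phi (opn X) * norm v)"
    by (intro sums_mult2 phi_sums)
  moreover have "norm (pc k *\<^sub>R (matpow X k *v v)) \<le> pc k * opn X ^ k * norm v" for k
  proof -
    have "norm (matpow X k *v v) \<le> opn X ^ k * norm v"
      using opn_bound[of "matpow X k" v] opn_matpow[of X k]
      by (meson mult_right_mono norm_ge_zero order_trans)
    thus ?thesis by (simp add: pc_nonneg mult.assoc mult_left_mono)
  qed
  ultimately show "norm (mphi X *v v) \<le> phi (opn X) * norm v"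
    by (intro norm_sums_le[OF mphi_vec_sums]) auto
qed

lemma cadj_matpow: "cadj (matpow X k) = matpow (cadj X) k"
  by (induction k) (simp_all add: cadj_mat cadj_mult matpow_comm)

lemma cadj_mphi: "cadj (mphi (X::complex^'n^'n)) = mphi (cadj X)"
proof -
  have "(\<lambda>k. cadj (pc k *\<^sub>R matpow X k)) sums cadj (mphi X)"
    by (rule bounded_linear.sums[OF bl_cadj mphi_sums])
  hence "(\<lambda>k. pc k *\<^sub>R matpow (cadj X) k) sums cadj (mphi X)"
    by (simp add: cadj_scaleR cadj_matpow)
  thus ?thesis using mphi_sums[of "cadj X"] sums_unique2 by blast
qed

lemma sum_UNIV_Plus: "(\<Sum>u\<in>(UNIV::('a::finite + 'b::finite) set). f u) = (\<Sum>i\<in>UNIV. f (Inl i)) + (\<Sum>i\<in>UNIV. f (Inr i))"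
  by (subst UNIV_Plus_UNIV[symmetric], subst sum.Plus) auto

definition vtop :: "complex^('r::finite + 'r) \<Rightarrow> complex^'r" where "vtop z = (\<chi> i. z $ Inl i)"
definition vbot :: "complex^('r::finite + 'r) \<Rightarrow> complex^'r" where "vbot z = (\<chi> i. z $ Inr i)"
definition vemb :: "complex^'r::finite \<Rightarrow> complex^('r + 'r)" where
  "vemb u = (\<chi> z. case z of Inl j \<Rightarrow> u $ j | Inr j \<Rightarrow> 0)"

lemma bl_vbot: "bounded_linear (vbot :: complex^('r::finite + 'r) \<Rightarrow> complex^'r)"
proof -
  have "linear (vbot :: complex^('r::finite + 'r) \<Rightarrow> complex^'r)"
    by (rule linearI) (simp_all add: vbot_def vec_eq_iff)
  thus ?thesis by (simp add: linear_conv_bounded_linear)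
qed

locale blk =
  fixes N :: "complex^('r::finite + 'r)^('r + 'r)" and P Q :: "complex^'r^'r"
  assumes ll: "\<And>i j. N $ Inl i $ Inl j = P $ i $ j"
    and lr: "\<And>i j. N $ Inl i $ Inr j = 0"
    and rl: "\<And>i j. N $ Inr i $ Inl j = Q $ i $ j"
    and rr: "\<And>i j. N $ Inr i $ Inr j = P $ i $ j"
begin

lemma top_mv: "vtop (N *v z) = P *v vtop z"
  by (simp add: vtop_def matrix_vector_mult_def vec_eq_iff sum_UNIV_Plus ll lr)

lemma bot_mv: "vbot (N *v z) = Q *v vtop z + P *v vbot z"
  by (simp add: vtop_def vbot_def matrix_vector_mult_def vec_eq_iff sum_UNIV_Plus rl rr)

lemma pow_bounds:
  "norm (vtop (matpow N k *v vemb u)) \<le> opn P ^ k * norm u \<and>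
   norm (vbot (matpow N k *v vemb u)) \<le> real k * opn P ^ (k - 1) * opn Q * norm u"
proof (induction k)
  case 0
  have "vtop (vemb u) = u" "vbot (vemb u) = 0" by (simp_all add: vtop_def vbot_def vemb_def vec_eq_iff)
  thus ?case by simp
next
  case (Suc k)
  let ?z = "matpow N k *v vemb u"
  have z: "matpow N (Suc k) *v vemb u = N *v ?z" by (simp add: matrix_vector_mul_assoc)
  have t: "norm (vtop ?z) \<le> opn P ^ k * norm u" and b: "norm (vbot ?z) \<le> real k * opn P ^ (k - 1) * opn Q * norm u"
    using Suc by auto
  have "norm (vtop (N *v ?z)) \<le> opn P * norm (vtop ?z)" by (simp add: top_mv opn_bound)
  also have "\<dots> \<le> opn P * (opn P ^ k * norm u)" by (intro mult_left_mono t opn_nonneg)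
  finally have T: "norm (vtop (N *v ?z)) \<le> opn P ^ Suc k * norm u" by (simp add: mult_ac)
  have "norm (vbot (N *v ?z)) \<le> opn Q * norm (vtop ?z) + opn P * norm (vbot ?z)"
    unfolding bot_mv by (intro order_trans[OF norm_triangle_ineq] add_mono opn_bound)
  also have "\<dots> \<le> opn Q * (opn P ^ k * norm u) + opn P * (real k * opn P ^ (k - 1) * opn Q * norm u)"
    by (intro add_mono mult_left_mono t b opn_nonneg)
  also have "\<dots> = real (Suc k) * opn P ^ (Suc k - 1) * opn Q * norm u"
  proof (cases k)
    case 0 thus ?thesis by simp
  next
    case (Suc j) thus ?thesis by (simp add: algebra_simps)
  qed
  finally show ?case using T z by simp
qed

lemma corner_bound: "opn ((\<chi> i j. mphi N $ Inr i $ Inl j) :: complex^'r^'r) \<le> deriv phi (opn P) * opn Q"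
proof (rule opn_le)
  fix u :: "complex^'r"
  have eq: "(\<chi> i j. mphi N $ Inr i $ Inl j) *v u = vbot (mphi N *v vemb u)"
    by (simp add: vbot_def vemb_def matrix_vector_mult_def vec_eq_iff sum_UNIV_Plus)
  have S: "(\<lambda>k. pc k *\<^sub>R vbot (matpow N k *v vemb u)) sums vbot (mphi N *v vemb u)"
    using bounded_linear.sums[OF bl_vbot mphi_vec_sums[of N "vemb u"]]
    by (simp add: linear_simps(5)[OF bl_vbot])
  have G: "(\<lambda>k. real k * pc k * opn P ^ (k - Suc 0) * (opn Q * norm u)) sums (deriv phi (opn P) * (opn Q * norm u))"
    by (intro sums_mult2 dphi_sums)
  have "norm (vbot (mphi N *v vemb u)) \<le> deriv phi (opn P) * (opn Q * norm u)"
  proof (rule norm_sums_le[OF S G])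
    fix k
    have "norm (pc k *\<^sub>R vbot (matpow N k *v vemb u)) = pc k * norm (vbot (matpow N k *v vemb u))"
      by (simp add: pc_nonneg)
    also have "\<dots> \<le> pc k * (real k * opn P ^ (k - 1) * opn Q * norm u)"
      using pow_bounds[of k u] by (intro mult_left_mono pc_nonneg) auto
    finally show "norm (pc k *\<^sub>R vbot (matpow N k *v vemb u)) \<le> real k * pc k * opn P ^ (k - Suc 0) * (opn Q * norm u)"
      by (simp add: mult_ac)
  qed
  thus "norm ((\<chi> i j. mphi N $ Inr i $ Inl j) *v u) \<le> deriv phi (opn P) * opn Q * norm u"
    by (simp add: eq mult.assoc)
qed

end



definition jsw :: "'k \<times> bool \<Rightarrow> 'k \<times> bool" where "jsw u = (fst u, \<not> snd u)"

lemma J0: "(Jmat :: complex^('k::finite\<times>bool)^('k\<times>bool)) $ (a,b) $ (a',b') = (if a = a' then complex_of_real (Jblk b b') else 0)"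
  by (simp add: Jmat_def)

lemma J1: "u' \<noteq> jsw u \<Longrightarrow> (Jmat :: complex^('k::finite\<times>bool)^('k\<times>bool)) $ u $ u' = 0"
  by (cases u; cases u') (simp add: J0 jsw_def Jblk_def)

lemma J2: "(Jmat :: complex^('k::finite\<times>bool)^('k\<times>bool)) $ u $ jsw u = (if snd u then -1 else 1)"
  by (cases u) (simp add: J0 jsw_def Jblk_def)

lemma Jmat_vec: "((Jmat :: complex^('k::finite\<times>bool)^('k\<times>bool)) *v v) $ u = (if snd u then - v $ jsw u else v $ jsw u)"
proof -
  let ?f = "\<lambda>u'. (Jmat :: complex^('k\<times>bool)^('k\<times>bool)) $ u $ u' * v $ u'"
  have "(\<Sum>u'\<in>UNIV. ?f u') = (\<Sum>u'\<in>UNIV. if u' = jsw u then ?f (jsw u) else 0)"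
  proof (rule sum.cong)
    fix u' show "?f u' = (if u' = jsw u then ?f (jsw u) else 0)"
      by (cases "u' = jsw u") (simp_all add: J1)
  qed simp
  also have "\<dots> = ?f (jsw u)" by simp
  finally have "(\<Sum>u'\<in>UNIV. ?f u') = ?f (jsw u)" .
  moreover have "((Jmat :: complex^('k\<times>bool)^('k\<times>bool)) *v v) $ u = (\<Sum>u'\<in>UNIV. ?f u')"
    by (simp only: matrix_vector_mult_def vec_lambda_beta)
  ultimately show ?thesis by (simp add: J2)
qed

lemma jsw_jsw: "jsw (jsw u) = u" by (simp add: jsw_def)

lemma opn_J: "opn (Jmat :: complex^('k::finite\<times>bool)^('k\<times>bool)) \<le> 1"
proof (rule opn_le)
  fix v :: "complex^('k\<times>bool)"
  have n: "norm (((Jmat :: complex^('k\<times>bool)^('k\<times>bool)) *v v) $ u) = norm (v $ jsw u)" for u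
    by (simp add: Jmat_vec)
  have "(norm ((Jmat :: complex^('k\<times>bool)^('k\<times>bool)) *v v))\<^sup>2 = (\<Sum>u\<in>UNIV. (norm (v $ jsw u))\<^sup>2)"
    by (simp only: norm_vec_sq n)
  also have "\<dots> = (\<Sum>u\<in>UNIV. (norm (v $ u))\<^sup>2)"
    by (rule sum.reindex_bij_witness[of _ jsw jsw]) (simp_all add: jsw_jsw)
  also have "\<dots> = (norm v)\<^sup>2" by (simp only: norm_vec_sq)
  finally have "norm ((Jmat :: complex^('k\<times>bool)^('k\<times>bool)) *v v) = norm v"
    using power2_eq_iff_nonneg norm_ge_zero by blast
  thus "norm (Jmat *v v) \<le> 1 * norm v" by simp
qed

lemma J_anti: "(Jmat :: complex^('k::finite\<times>bool)^('k\<times>bool)) $ u $ w = - Jmat $ w $ u"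
  by (cases u; cases w) (auto simp: J0 Jblk_def)

lemma J_real: "cnj ((Jmat :: complex^('k::finite\<times>bool)^('k\<times>bool)) $ u $ w) = Jmat $ u $ w"
  by (cases u; cases w) (auto simp: J0 Jblk_def)

lemma cadj_J: "cadj (Jmat :: complex^('k::finite\<times>bool)^('k\<times>bool)) = - Jmat"
  by (simp add: cadj_def vec_eq_iff J_real) (metis J_anti)

lemma transpose_J: "transpose (Jmat :: complex^('k::finite\<times>bool)^('k\<times>bool)) = - Jmat"
  by (simp add: transpose_def vec_eq_iff) (metis J_anti)

lemma mult_uminus_right: "(A::complex^'c^'r) ** (- B) = - (A ** (B::complex^'d^'c))"
  by (simp add: matrix_matrix_mult_def vec_eq_iff sum_negf)

lemma mult_uminus_left: "(- A::complex^'c^'r) ** B = - (A ** (B::complex^'d^'c))"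
  by (simp add: matrix_matrix_mult_def vec_eq_iff sum_negf)

lemma Omega_entry: "(Omega :: complex^('k::finite\<times>bool)^('k\<times>bool)) $ u $ w = (if u = w then 1 else 0) + \<i> * Jmat $ u $ w"
  by (simp add: Omega_def mat_mult_left) (simp add: mat_def)

lemma transpose_Omega: "transpose (Omega :: complex^('k::finite\<times>bool)^('k\<times>bool)) = mat 1 - mat \<i> ** Jmat"
proof -
  have "transpose (Omega :: complex^('k\<times>bool)^('k\<times>bool)) $ u $ w = (mat 1 - mat \<i> ** (Jmat :: complex^('k\<times>bool)^('k\<times>bool))) $ u $ w" for u w
  proof -
    have r: "(mat 1 - mat \<i> ** (Jmat :: complex^('k\<times>bool)^('k\<times>bool))) $ u $ w = (if u = w then 1 else 0) - \<i> * Jmat $ u $ w"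
      by (simp add: mat_mult_left) (simp add: mat_def)
    have "transpose (Omega :: complex^('k\<times>bool)^('k\<times>bool)) $ u $ w = (if w = u then 1 else 0) + \<i> * Jmat $ w $ u"
      by (simp add: transpose_def Omega_entry)
    also have "\<dots> = (if u = w then 1 else 0) - \<i> * Jmat $ u $ w"
      unfolding J_anti[of w u] by auto
    finally show ?thesis using r by simp
  qed
  thus ?thesis by (simp add: vec_eq_iff)
qed

lemma S_entry: "(Smat :: complex^('k::finite\<times>bool)^('k\<times>bool)) $ u $ w = (1 / sqrt 2) *\<^sub>R ((if u = w then 1 else 0) - \<i> * Jmat $ u $ w)"
proof -
  have "(Smat :: complex^('k\<times>bool)^('k\<times>bool)) $ u $ w = (1 / sqrt 2) *\<^sub>R ((Omega :: complex^('k\<times>bool)^('k\<times>bool)) $ w $ u)"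
    by (simp add: Smat_def transpose_def)
  also have "\<dots> = (1 / sqrt 2) *\<^sub>R ((if u = w then 1 else 0) - \<i> * Jmat $ u $ w)"
    unfolding Omega_entry J_anti[of w u] by auto
  finally show ?thesis .
qed

lemma cadj_S: "cadj (Smat :: complex^('k::finite\<times>bool)^('k\<times>bool)) = Smat"
proof -
  have "cadj (Smat :: complex^('k\<times>bool)^('k\<times>bool)) $ u $ w = Smat $ u $ w" for u w
  proof -
    have "cadj (Smat :: complex^('k\<times>bool)^('k\<times>bool)) $ u $ w = cnj (Smat $ w $ u)" by (simp add: cadj_def)
    also have "\<dots> = (1 / sqrt 2) *\<^sub>R ((if w = u then 1 else 0) + \<i> * Jmat $ w $ u)"
      unfolding S_entry by (simp add: J_real)
    also have "\<dots> = Smat $ u $ w"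
      unfolding S_entry J_anti[of w u] by auto
    finally show ?thesis .
  qed
  thus ?thesis by (simp add: vec_eq_iff)
qed


lemma opn_S: "opn (Smat :: complex^('k::finite\<times>bool)^('k\<times>bool)) \<le> sqrt 2"
proof -
  have "opn (Smat :: complex^('k\<times>bool)^('k\<times>bool)) \<le> \<bar>1 / sqrt 2\<bar> * opn (mat 1 - mat \<i> ** (Jmat :: complex^('k\<times>bool)^('k\<times>bool)))"
    unfolding Smat_def transpose_Omega by (rule opn_scaleR)
  also have "\<dots> \<le> (1 / sqrt 2) * 2"
  proof -
    have "opn (mat 1 - mat \<i> ** (Jmat :: complex^('k\<times>bool)^('k\<times>bool))) \<le> opn (mat 1 :: complex^('k\<times>bool)^('k\<times>bool)) + opn (mat \<i> ** (Jmat :: complex^('k\<times>bool)^('k\<times>bool)))"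
      by (rule opn_diff)
    also have "\<dots> \<le> 1 + 1 * 1"
    proof (intro add_mono)
      show "opn (mat 1 :: complex^('k\<times>bool)^('k\<times>bool)) \<le> 1" using opn_mat[of 1] by simp
      show "opn (mat \<i> ** (Jmat :: complex^('k\<times>bool)^('k\<times>bool))) \<le> 1 * 1"
      proof -
        have "opn (mat \<i> ** (Jmat :: complex^('k\<times>bool)^('k\<times>bool))) \<le> opn (Jmat :: complex^('k\<times>bool)^('k\<times>bool))"
          using opn_mat_mult[of \<i> "Jmat :: complex^('k\<times>bool)^('k\<times>bool)"] by simp
        thus ?thesis using opn_J[where 'k='k] by simp
      qed
    qed
    finally have "opn (mat 1 - mat \<i> ** (Jmat :: complex^('k\<times>bool)^('k\<times>bool))) \<le> 2" by simp
    thus ?thesis using mult_left_mono[of _ 2 "1 / sqrt 2"] by simp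
  qed
  also have "\<dots> = sqrt 2"
  proof -
    have "sqrt 2 * sqrt 2 = (2::real)" by simp
    thus ?thesis by (metis div_by_1 divide_divide_eq_right nonzero_mult_div_cancel_left real_sqrt_eq_zero_cancel_iff times_divide_eq_left zero_neq_numeral)
  qed
  finally show ?thesis .
qed


lemma cadj_matmult: "cadj (mat c ** X) = mat (cnj c) ** cadj (X::complex^'c^'r)"
  by (simp add: cadj_def mat_mult_left vec_eq_iff)

lemma cadj_Psi: "cadj (Psi (F::complex^('k::finite\<times>bool)^'r::finite)) = - Psi F"
  by (simp add: Psi_def cadj_mult cadj_cadj cadj_J mult_uminus_left mult_uminus_right matrix_mul_assoc)

abbreviation Pm :: "real \<Rightarrow> complex^('k::finite\<times>bool)^'r::finite \<Rightarrow> complex^'r^'r" where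
  "Pm \<theta> F \<equiv> mat (2 * \<i> * complex_of_real \<theta>) ** Psi F"

lemma herm_P: "herm (Pm \<theta> F)"
  unfolding herm_def cadj_matmult cadj_Psi by (simp add: mat_mult_left vec_eq_iff)

lemma opn_cadj_le: "opn (cadj F) \<le> opn F" by (rule opn_cadj)

lemma opn_Psi: "opn (Psi (F::complex^('k::finite\<times>bool)^'r::finite)) \<le> (opn F)\<^sup>2"
proof -
  have "opn (Psi F) \<le> opn (F ** Jmat) * opn (cadj F)" unfolding Psi_def by (rule opn_mult)
  also have "\<dots> \<le> (opn F * opn (Jmat :: complex^('k\<times>bool)^('k\<times>bool))) * opn F"
    by (intro mult_mono opn_mult opn_cadj opn_nonneg mult_nonneg_nonneg)
  also have "\<dots> \<le> (opn F * 1) * opn F"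
    by (intro mult_mono opn_J opn_nonneg mult_nonneg_nonneg order_refl) simp
  finally show ?thesis by (simp add: power2_eq_square)
qed

lemma opn_P: assumes "0 \<le> \<theta>" shows "opn (Pm \<theta> (F::complex^('k::finite\<times>bool)^'r::finite)) \<le> 2 * \<theta> * (opn F)\<^sup>2"
proof -
  have "opn (Pm \<theta> F) \<le> norm (2 * \<i> * complex_of_real \<theta>) * opn (Psi F)" by (rule opn_mat_mult)
  also have "\<dots> \<le> (2 * \<theta>) * (opn F)\<^sup>2"
    using assms by (intro mult_mono opn_Psi) (auto simp: norm_mult opn_nonneg)
  finally show ?thesis .
qed

lemma opn_mult3: "opn (A ** B ** C) \<le> opn A * opn B * opn C"
  by (meson mult_right_mono opn_mult opn_nonneg order_trans)

lemma opn_mult5: "opn (A ** B ** C ** D ** E) \<le> opn A * opn B * opn C * opn D * opn E"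
proof -
  have "opn (A ** B ** C ** D ** E) \<le> opn (A ** B ** C) * opn D * opn E" by (rule opn_mult3)
  also have "\<dots> \<le> (opn A * opn B * opn C) * opn D * opn E"
    by (intro mult_right_mono opn_mult3 opn_nonneg)
  finally show ?thesis .
qed

lemma herm_Sigma: "cadj (Sigma \<theta> (F::complex^('k::finite\<times>bool)^'r::finite)) = Sigma \<theta> F"
proof -
  have h: "cadj (mphi (Pm \<theta> F)) = mphi (Pm \<theta> F)"
    using herm_P[of \<theta> F] by (simp add: cadj_mphi herm_def)
  show ?thesis
    unfolding Sigma_def by (simp add: cadj_mult cadj_S cadj_cadj h matrix_mul_assoc)
qed

lemma herm_Delta: "herm (Delta \<theta> (F::complex^('k::finite\<times>bool)^'r::finite))"
  unfolding herm_def Delta_def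
  by (simp add: cadj_diff cadj_mat cadj_mult herm_Sigma mat_comm)

lemma opn_Sigma: "opn (Sigma \<theta> (F::complex^('k::finite\<times>bool)^'r::finite)) \<le> 2 * (opn F)\<^sup>2 * phi (opn (Pm \<theta> F))"
proof -
  let ?S = "Smat :: complex^('k\<times>bool)^('k\<times>bool)"
  have "opn (Sigma \<theta> F) \<le> opn ?S * opn (cadj F) * opn (mphi (Pm \<theta> F)) * opn F * opn ?S"
    unfolding Sigma_def by (rule opn_mult5)
  also have "\<dots> \<le> sqrt 2 * opn F * phi (opn (Pm \<theta> F)) * opn F * sqrt 2"
    by (intro mult_mono opn_S opn_cadj opn_mphi opn_nonneg mult_nonneg_nonneg order_refl phi_nonneg) auto
  also have "\<dots> = 2 * (opn F)\<^sup>2 * phi (opn (Pm \<theta> F))"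
    by (simp add: power2_eq_square mult_ac)
  finally show ?thesis .
qed

lemma opn_Delta: assumes "0 \<le> \<theta>"
  shows "opn (Delta \<theta> (F::complex^('k::finite\<times>bool)^'r::finite)) \<le> 1 + \<theta> * (2 * (opn F)\<^sup>2 * phi (opn (Pm \<theta> F)))"
proof -
  have "opn (Delta \<theta> F) \<le> opn (mat 1 :: complex^('k\<times>bool)^('k\<times>bool)) + opn (mat (complex_of_real \<theta>) ** Sigma \<theta> F)"
    unfolding Delta_def by (rule opn_diff)
  also have "\<dots> \<le> 1 + norm (complex_of_real \<theta>) * opn (Sigma \<theta> F)"
    using opn_mat[of 1] by (intro add_mono opn_mat_mult) auto
  also have "\<dots> \<le> 1 + \<theta> * (2 * (opn F)\<^sup>2 * phi (opn (Pm \<theta> F)))"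
    using assms by (intro add_mono mult_mono opn_Sigma) (auto simp: opn_nonneg)
  finally show ?thesis .
qed



lemma inv_bound:
  fixes M :: "complex^'n^'n"
  assumes L: "L > 0" and low: "\<And>v. L * norm v \<le> norm (M *v v)"
  shows "M ** matrix_inv M = mat 1" "matrix_inv M ** M = mat 1" "opn (matrix_inv M) \<le> 1 / L"
proof -
  have "\<forall>x. M *v x = 0 \<longrightarrow> x = 0"
  proof (intro allI impI)
    fix x assume "M *v x = 0"
    hence "L * norm x \<le> 0" using low[of x] by simp
    thus "x = 0" using L by (simp add: mult_le_0_iff)
  qed
  hence "invertible M" by (simp add: invertible_left_inverse matrix_left_invertible_ker)
  hence ex: "\<exists>A'. M ** A' = mat 1 \<and> A' ** M = mat 1" by (simp add: invertible_def)
  have both: "M ** matrix_inv M = mat 1 \<and> matrix_inv M ** M = mat 1"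
    unfolding matrix_inv_def by (rule someI_ex[OF ex])
  thus "M ** matrix_inv M = mat 1" "matrix_inv M ** M = mat 1" by auto
  show "opn (matrix_inv M) \<le> 1 / L"
  proof (rule opn_le)
    fix v
    have "L * norm (matrix_inv M *v v) \<le> norm (M *v (matrix_inv M *v v))" by (rule low)
    also have "\<dots> = norm v" using both by (simp add: matrix_vector_mul_assoc)
    finally show "norm (matrix_inv M *v v) \<le> 1 / L * norm v" using L by (simp add: field_simps mult.commute)
  qed
qed

lemma main_w:
  fixes F :: "complex^('k::finite\<times>bool)^'r::finite"
  assumes th: "\<theta> > 0" and L: "L > 0" and Ll: "L \<le> lambda_min (Delta \<theta> F)"
  shows "onorm (Mop \<theta> F) \<le> 2 * phi (opn (Pm \<theta> F)) / L + 2 * \<theta> * (deriv phi (opn (Pm \<theta> F)) * (2 * (opn F)\<^sup>2 / L))"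
proof -
  let ?S = "Smat :: complex^('k\<times>bool)^('k\<times>bool)"
  let ?D = "matrix_inv (Delta \<theta> F)"
  let ?p = "opn (Pm \<theta> F)"
  let ?Q = "F ** ?S ** ?D ** ?S ** cadj F"
  have low: "L * norm v \<le> norm (Delta \<theta> F *v v)" for v
    using herm_lower[OF herm_Delta, of \<theta> F v] Ll mult_right_mono[OF Ll norm_ge_zero[of v]] by linarith
  have opnD: "opn ?D \<le> 1 / L" by (rule inv_bound(3)[OF L low])
  have sq2: "sqrt 2 * sqrt 2 = (2::real)" by simp
  have SDS: "opn (?S ** ?D ** ?S) \<le> 2 / L"
  proof -
    have "opn (?S ** ?D ** ?S) \<le> opn ?S * opn ?D * opn ?S" by (rule opn_mult3)
    also have "\<dots> \<le> sqrt 2 * (1 / L) * sqrt 2"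
      by (intro mult_mono opn_S opnD opn_nonneg mult_nonneg_nonneg) (use L in auto)
    also have "\<dots> = 2 / L" using sq2 by (simp add: field_simps)
    finally show ?thesis .
  qed
  have Qb: "opn ?Q \<le> 2 * (opn F)\<^sup>2 / L"
  proof -
    have "opn ?Q \<le> opn F * opn ?S * opn ?D * opn ?S * opn (cadj F)" by (rule opn_mult5)
    also have "\<dots> \<le> opn F * sqrt 2 * (1 / L) * sqrt 2 * opn F"
      by (intro mult_mono opn_S opnD opn_nonneg mult_nonneg_nonneg opn_cadj order_refl) (use L in auto)
    also have "\<dots> = 2 * (opn F)\<^sup>2 / L" using sq2 by (simp add: field_simps power2_eq_square)
    finally show ?thesis .
  qed
  interpret B: blk "blockM \<theta> F" "Pm \<theta> F" ?Q
    by unfold_locales (simp_all add: blockM_def Let_def)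
  have varpi_eq: "varpi \<theta> F = (\<chi> i j. mphi (blockM \<theta> F) $ Inr i $ Inl j)" by (simp add: varpi_def)
  have dp0: "0 \<le> deriv phi ?p" by (rule dphi_nonneg[OF opn_nonneg])
  have Vb: "opn (varpi \<theta> F) \<le> deriv phi ?p * (2 * (opn F)\<^sup>2 / L)"
    unfolding varpi_eq using B.corner_bound order_trans mult_left_mono[OF Qb dp0] by blast
  have Jb: "opn (transpose (mat (2 * \<i> * complex_of_real \<theta>) ** (Jmat :: complex^('k\<times>bool)^('k\<times>bool)))) \<le> 2 * \<theta>"
  proof -
    have "opn (transpose (mat (2 * \<i> * complex_of_real \<theta>) ** (Jmat :: complex^('k\<times>bool)^('k\<times>bool))))
        \<le> opn (mat (2 * \<i> * complex_of_real \<theta>) ** (Jmat :: complex^('k\<times>bool)^('k\<times>bool)))" by (rule opn_transpose)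
    also have "\<dots> \<le> norm (2 * \<i> * complex_of_real \<theta>) * opn (Jmat :: complex^('k\<times>bool)^('k\<times>bool))" by (rule opn_mat_mult)
    also have "\<dots> \<le> norm (2 * \<i> * complex_of_real \<theta>) * 1" by (intro mult_left_mono opn_J) auto
    also have "\<dots> = 2 * \<theta>" using th by (simp add: norm_mult)
    finally show ?thesis .
  qed
  show ?thesis
  proof (rule onorm_le)
    fix X :: "complex^('k\<times>bool)^'r"
    have T1: "norm (mphi (Pm \<theta> F) ** X ** ?S ** ?D ** ?S) \<le> phi ?p * norm X * (2 / L)"
    proof -
      have "mphi (Pm \<theta> F) ** X ** ?S ** ?D ** ?S = mphi (Pm \<theta> F) ** X ** (?S ** ?D ** ?S)"
        by (simp add: matrix_mul_assoc)
      hence "norm (mphi (Pm \<theta> F) ** X ** ?S ** ?D ** ?S) \<le> opn (mphi (Pm \<theta> F)) * norm X * opn (transpose (?S ** ?D ** ?S))"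
        using norm_sandwich by metis
      also have "\<dots> \<le> phi ?p * norm X * (2 / L)"
        by (intro mult_mono opn_mphi order_trans[OF opn_transpose SDS] mult_nonneg_nonneg phi_nonneg opn_nonneg norm_ge_zero order_refl)
      finally show ?thesis .
    qed
    have T2: "norm (varpi \<theta> F ** X ** (mat (2 * \<i> * complex_of_real \<theta>) ** Jmat)) \<le> deriv phi ?p * (2 * (opn F)\<^sup>2 / L) * norm X * (2 * \<theta>)"
    proof -
      have "norm (varpi \<theta> F ** X ** (mat (2 * \<i> * complex_of_real \<theta>) ** Jmat)) \<le> opn (varpi \<theta> F) * norm X * opn (transpose (mat (2 * \<i> * complex_of_real \<theta>) ** (Jmat :: complex^('k\<times>bool)^('k\<times>bool))))"
        by (rule norm_sandwich)
      also have "\<dots> \<le> deriv phi ?p * (2 * (opn F)\<^sup>2 / L) * norm X * (2 * \<theta>)"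
        by (intro mult_mono Vb Jb mult_nonneg_nonneg opn_nonneg norm_ge_zero order_refl) (use L dp0 in auto)
      finally show ?thesis .
    qed
    have "norm (Mop \<theta> F X) \<le> norm (mphi (Pm \<theta> F) ** X ** ?S ** ?D ** ?S) + norm (varpi \<theta> F ** X ** (mat (2 * \<i> * complex_of_real \<theta>) ** Jmat))"
      unfolding Mop_def by (rule norm_triangle_ineq)
    also have "\<dots> \<le> phi ?p * norm X * (2 / L) + deriv phi ?p * (2 * (opn F)\<^sup>2 / L) * norm X * (2 * \<theta>)"
      by (rule add_mono[OF T1 T2])
    also have "\<dots> = (2 * phi ?p / L + 2 * \<theta> * (deriv phi ?p * (2 * (opn F)\<^sup>2 / L))) * norm X"
      by (simp add: algebra_simps)
    finally show "norm (Mop \<theta> F X) \<le> (2 * phi ?p / L + 2 * \<theta> * (deriv phi ?p * (2 * (opn F)\<^sup>2 / L))) * norm X" .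
  qed
qed



lemma smult_split: "(\<i> * complex_of_real w) *s (v::complex^'n) = w *\<^sub>R (\<i> *s v)"
  by (simp add: smult_scaleR vector_smult_assoc mult.commute)

lemma hurwitz_lower:
  fixes A :: "real^'n::finite^'n"
  assumes hw: "hurwitz A"
  shows "\<exists>c>0. \<forall>w v. c * norm v \<le> norm ((mat (\<i> * complex_of_real w) - cmat A) *v v)"
proof -
  let ?K = "cmat A"
  define R where "R = opn ?K + 1"
  have R1: "R \<ge> 1" by (simp add: R_def opn_nonneg)
  have eq: "(mat (\<i> * complex_of_real w) - ?K) *v v = w *\<^sub>R (mat \<i> *v v) - ?K *v v" for w v
    by (simp add: matrix_vector_mult_diff_rdistrib mat_vec smult_split)
  define g where "g = (\<lambda>x::real \<times> (complex^'n). norm (fst x *\<^sub>R (mat \<i> *v snd x) - ?K *v snd x))"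
  define T where "T = {-R..R} \<times> sphere (0::complex^'n) 1"
  have cT: "compact T" unfolding T_def by (intro compact_Times compact_Icc compact_sphere)
  have neT: "T \<noteq> {}" unfolding T_def using R1 by auto
  have contg: "continuous_on T g"
    unfolding g_def
    by (intro continuous_intros bounded_linear.continuous_on[OF matrix_vector_mul_bounded_linear])
  obtain x0 where x0: "x0 \<in> T" and mn: "\<And>y. y \<in> T \<Longrightarrow> g x0 \<le> g y"
    using continuous_attains_inf[OF cT neT contg] by blast
  have c0: "g x0 > 0"
  proof (rule ccontr)
    assume "\<not> g x0 > 0"
    hence "g x0 = 0" by (simp add: g_def)
    hence "fst x0 *\<^sub>R (mat \<i> *v snd x0) = ?K *v snd x0" by (simp add: g_def)
    hence "?K *v snd x0 = (\<i> * complex_of_real (fst x0)) *s snd x0" by (simp add: mat_vec smult_split)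
    moreover have "snd x0 \<noteq> 0" using x0 by (auto simp: T_def)
    ultimately have "Re (\<i> * complex_of_real (fst x0)) < 0" using hw unfolding hurwitz_def by blast
    thus False by simp
  qed
  define c where "c = min (g x0) 1"
  have cpos: "c > 0" using c0 by (simp add: c_def)
  have unit: "c \<le> norm ((mat (\<i> * complex_of_real w) - ?K) *v v)" if nv: "norm v = 1" for w v
  proof (cases "\<bar>w\<bar> \<le> R")
    case True
    hence "(w, v) \<in> T" using nv by (auto simp: T_def)
    hence "g x0 \<le> g (w, v)" by (rule mn)
    thus ?thesis by (simp add: c_def g_def eq)
  next
    case False
    have "norm (w *\<^sub>R (mat \<i> *v v)) = \<bar>w\<bar>" using nv by (simp add: mat_vec norm_smult)
    moreover have "norm (?K *v v) \<le> opn ?K" using opn_bound[of ?K v] nv by simp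
    ultimately have "\<bar>w\<bar> - opn ?K \<le> norm (w *\<^sub>R (mat \<i> *v v) - ?K *v v)"
      by (metis norm_triangle_ineq2 order_trans diff_left_mono)
    moreover have "1 \<le> \<bar>w\<bar> - opn ?K" using False by (simp add: R_def)
    ultimately show ?thesis by (simp add: c_def eq)
  qed
  have "c * norm v \<le> norm ((mat (\<i> * complex_of_real w) - ?K) *v v)" for w v
  proof (cases "v = 0")
    case True thus ?thesis by simp
  next
    case False
    hence nv: "norm v > 0" by simp
    have "c \<le> norm ((mat (\<i> * complex_of_real w) - ?K) *v ((1 / norm v) *\<^sub>R v))"
      by (rule unit) (use nv in simp)
    also have "\<dots> = norm ((mat (\<i> * complex_of_real w) - ?K) *v v) / norm v"
      by (simp add: mv_scaleR)
    finally show ?thesis using nv by (simp add: field_simps)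
  qed
  thus ?thesis using cpos by blast
qed

lemma F_bound:
  fixes A :: "real^'n::finite^'n" and B :: "real^'m::finite^'n" and C :: "real^'n^'r::finite"
  assumes hw: "hurwitz A"
  shows "\<exists>K. \<forall>w. opn (Ffun A B C w) \<le> K"
proof -
  obtain c where c: "c > 0" and low: "\<And>w v. c * norm v \<le> norm ((mat (\<i> * complex_of_real w) - cmat A) *v v)"
    using hurwitz_lower[OF hw] by blast
  have "opn (Ffun A B C w) \<le> opn (cmat C) * (1 / c) * opn (cmat B)" for w
  proof -
    have G: "opn (Gfun A (\<i> * complex_of_real w)) \<le> 1 / c"
      unfolding Gfun_def by (rule inv_bound(3)[OF c low])
    have "opn (Ffun A B C w) \<le> opn (cmat C) * opn (Gfun A (\<i> * complex_of_real w)) * opn (cmat B)"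
      unfolding Ffun_def by (rule opn_mult3)
    also have "\<dots> \<le> opn (cmat C) * (1 / c) * opn (cmat B)"
      by (intro mult_mono G opn_nonneg mult_nonneg_nonneg order_refl) (use c in auto)
    finally show ?thesis .
  qed
  thus ?thesis by blast
qed



theorem lemma6p3:
  fixes A :: "real^'n::finite^'n" and B :: "real^('k::finite \<times> bool)^'n"
    and C :: "real^'n^'r::finite" and \<theta> :: real
  assumes "even CARD('n)"
    and "\<theta> > 0"
    and "hurwitz A"
    and "(INF w. lambda_min (Delta \<theta> (Ffun A B C w))) > 0"
  shows "\<forall>w. onorm (Mop \<theta> (Ffun A B C w))
      \<le> 2 * vartheta CARD('r)
              (2 * \<theta> * (SUP w'. onorm (\<lambda>v. Ffun A B C w' *v v))\<^sup>2)
          / (INF w'. lambda_min (Delta \<theta> (Ffun A B C w')))"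
proof
  fix w
  note th = assms(2)
  let ?F = "Ffun A B C"
  have opn_eq: "onorm (\<lambda>v. ?F w' *v v) = opn (?F w')" for w' by (simp add: opn_def)
  obtain K where K: "\<And>w. opn (?F w) \<le> K" using F_bound[OF assms(3), of B C] by blast
  have K0: "0 \<le> K" using K[of 0] opn_nonneg order_trans by blast
  define s where "s = (SUP w'. opn (?F w'))"
  have bddF: "bdd_above (range (\<lambda>w'. opn (?F w')))" using K by (intro bdd_aboveI2)
  have fs: "opn (?F w') \<le> s" for w' unfolding s_def by (rule cSUP_upper[OF UNIV_I bddF])
  have s0: "0 \<le> s" using fs[of 0] opn_nonneg order_trans by blast
  have lm_low: "- (1 + \<theta> * (2 * K\<^sup>2 * phi (2 * \<theta> * K\<^sup>2))) \<le> lambda_min (Delta \<theta> (?F w'))" for w'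
  proof -
    have f0: "0 \<le> opn (?F w')" by (rule opn_nonneg)
    have fK2: "(opn (?F w'))\<^sup>2 \<le> K\<^sup>2" using K[of w'] f0 by (simp add: power_mono)
    have pP: "opn (Pm \<theta> (?F w')) \<le> 2 * \<theta> * K\<^sup>2"
      using opn_P[of \<theta> "?F w'"] th fK2 by (smt (verit) mult_left_mono)
    have ph: "phi (opn (Pm \<theta> (?F w'))) \<le> phi (2 * \<theta> * K\<^sup>2)" by (rule phi_mono[OF opn_nonneg pP])
    have "opn (Delta \<theta> (?F w')) \<le> 1 + \<theta> * (2 * (opn (?F w'))\<^sup>2 * phi (opn (Pm \<theta> (?F w'))))"
      by (rule opn_Delta) (use th in simp)
    also have "\<dots> \<le> 1 + \<theta> * (2 * K\<^sup>2 * phi (2 * \<theta> * K\<^sup>2))"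
      using th fK2 ph by (intro add_mono order_refl mult_left_mono mult_mono phi_nonneg opn_nonneg) auto
    finally show ?thesis using herm_lmin(2)[OF herm_Delta, of \<theta> "?F w'"] by linarith
  qed
  define L where "L = (INF w'. lambda_min (Delta \<theta> (?F w')))"
  have L0: "L > 0" using assms(4) by (simp add: L_def)
  have bddL: "bdd_below (range (\<lambda>w'. lambda_min (Delta \<theta> (?F w'))))" using lm_low by (intro bdd_belowI2)
  have Ll: "L \<le> lambda_min (Delta \<theta> (?F w))" unfolding L_def by (rule cINF_lower[OF bddL UNIV_I])
  let ?f = "opn (?F w)"
  let ?p = "opn (Pm \<theta> (?F w))"
  define a where "a = 2 * \<theta> * s\<^sup>2"
  have f0: "0 \<le> ?f" by (rule opn_nonneg)
  have fs2: "?f\<^sup>2 \<le> s\<^sup>2" using fs[of w] f0 by (simp add: power_mono)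
  have ftheta: "2 * \<theta> * ?f\<^sup>2 \<le> a" unfolding a_def using th fs2 by simp
  have pa: "?p \<le> a" using opn_P[of \<theta> "?F w"] th ftheta by simp
  have p0: "0 \<le> ?p" by (rule opn_nonneg)
  have a0: "0 \<le> a" using p0 pa by simp
  have M: "onorm (Mop \<theta> (?F w)) \<le> 2 * phi ?p / L + 2 * \<theta> * (deriv phi ?p * (2 * ?f\<^sup>2 / L))"
    by (rule main_w[OF th L0 Ll])
  have t1: "2 * phi ?p / L \<le> 2 * phi a / L" using phi_mono[OF p0 pa] L0 by (simp add: divide_right_mono)
  have t2: "2 * \<theta> * (deriv phi ?p * (2 * ?f\<^sup>2 / L)) \<le> 2 * (deriv phi a * a) / L"
  proof -
    have "2 * \<theta> * (deriv phi ?p * (2 * ?f\<^sup>2 / L)) = 2 * (deriv phi ?p * (2 * \<theta> * ?f\<^sup>2)) / L"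
      by (simp add: field_simps)
    also have "\<dots> \<le> 2 * (deriv phi a * a) / L"
      using L0 dphi_mono[OF p0 pa] ftheta dphi_nonneg[OF p0] th
      by (intro divide_right_mono mult_left_mono mult_mono) auto
    finally show ?thesis .
  qed
  have r1: "1 \<le> sqrt (real CARD('r))" by simp
  have da0: "0 \<le> deriv phi a * a" using dphi_nonneg[OF a0] a0 by simp
  have t3: "2 * phi a / L + 2 * (deriv phi a * a) / L \<le> 2 * vartheta CARD('r) a / L"
  proof -
    have "deriv phi a * a \<le> sqrt (real CARD('r)) * deriv phi a * a"
      using mult_right_mono[OF r1 da0] by (simp add: mult_ac)
    hence "2 * phi a + 2 * (deriv phi a * a) \<le> 2 * vartheta CARD('r) a"
      by (simp add: vartheta_def)
    thus ?thesis using L0 by (simp add: add_divide_distrib[symmetric] divide_right_mono)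
  qed
  have "onorm (Mop \<theta> (?F w)) \<le> 2 * vartheta CARD('r) a / L" using M t1 t2 t3 by linarith
  thus "onorm (Mop \<theta> (?F w)) \<le> 2 * vartheta CARD('r) (2 * \<theta> * (SUP w'. onorm (\<lambda>v. ?F w' *v v))\<^sup>2)
          / (INF w'. lambda_min (Delta \<theta> (?F w')))"
    by (simp add: a_def s_def L_def opn_eq)
qed


end
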